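(* Assume the Continuum Hypothesis. If $\emptyset\neq U\subseteq\mathbb{R}$ and $\mathbb{R}\setminus U$ is uncountable, then there is a two-point selection $f$ on $\mathbb{R}$ such that $U\notin\tau_f$.
   Context: A two-point selection on $\mathbb{R}$ is a function $f$ from the set of two-element subsets of $\mathbb{R}$ to $\mathbb{R}$ with $f(F)\in F$. Write $r<_f s$ if $f(\{r,s\})=r$ ($r\ne s$), $(\leftarrow,r)_f=\{x: x<_f r\}$, $(r,\rightarrow)_f=\{x: r<_f x\}$. The topology $\tau_f$ on $\mathbb{R}$ is generated (as a subbase) by all sets $(\leftarrow,r)_f$, $(r,\rightarrow)_f$, $r\in\mathbb{R}$. *)

theory Defs
  imports "HOL-Analysis.Analysis" "HOL-Library.Equipollence"
begin

definition CH :: bool where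
  "CH \<longleftrightarrow> (\<forall>A :: real set. uncountable A \<longrightarrow> A \<approx> (UNIV :: real set))"

text \<open>Two-point selection on the reals (values on sets that are not two-element are irrelevant).\<close>
definition two_point_selection :: "(real set \<Rightarrow> real) \<Rightarrow> bool" where
  "two_point_selection f \<longleftrightarrow> (\<forall>r s. r \<noteq> s \<longrightarrow> f {r, s} \<in> {r, s})"

definition sel_less :: "(real set \<Rightarrow> real) \<Rightarrow> real \<Rightarrow> real \<Rightarrow> bool" where
  "sel_less f r s \<longleftrightarrow> r \<noteq> s \<and> f {r, s} = r"

definition sel_left_ray :: "(real set \<Rightarrow> real) \<Rightarrow> real \<Rightarrow> real set" where
  "sel_left_ray f r = {x. sel_less f x r}"

definition sel_right_ray :: "(real set \<Rightarrow> real) \<Rightarrow> real \<Rightarrow> real set" where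
  "sel_right_ray f r = {x. sel_less f r x}"

definition tau_sel :: "(real set \<Rightarrow> real) \<Rightarrow> real topology" where
  "tau_sel f = topology_generated_by (range (sel_left_ray f) \<union> range (sel_right_ray f))"

end

theory Submission
  imports Defs
begin

definition kless :: "real \<times> real \<Rightarrow> real \<times> real \<Rightarrow> bool" where
  "kless p q \<longleftrightarrow> fst p < fst q \<or> (fst p = fst q \<and> snd p < snd q)"

lemma sel_from_key:
  fixes K :: "real \<Rightarrow> real \<times> real"
  assumes injK: "inj K"
  defines "f \<equiv> (\<lambda>A. SOME x. x \<in> A \<and> (\<forall>y\<in>A. y \<noteq> x \<longrightarrow> kless (K x) (K y)))"
  shows "two_point_selection f" and "\<And>x r. sel_less f x r \<longleftrightarrow> x \<noteq> r \<and> kless (K x) (K r)"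
proof -
  have key: "f {r, s} = r \<longleftrightarrow> kless (K r) (K s)" "f {r,s} \<in> {r,s}" if "r \<noteq> s" for r s
  proof -
    have ne: "K r \<noteq> K s" using injK that by (meson injD)
    have tot: "kless (K r) (K s) \<or> kless (K s) (K r)" using ne
      unfolding kless_def by (metis linorder_neqE_linordered_idom prod_eq_iff)
    have asym: "\<not> (kless (K r) (K s) \<and> kless (K s) (K r))"
      unfolding kless_def by auto
    show "f {r, s} = r \<longleftrightarrow> kless (K r) (K s)" "f {r,s} \<in> {r,s}"
    proof (atomize (full), cases "kless (K r) (K s)")
      case True
      have "f {r,s} = r" unfolding f_def
        apply (rule some_equality) using True that asym by auto
      then show "(f {r, s} = r) = kless (K r) (K s) \<and> f {r, s} \<in> {r, s}" using True by simp
    next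
      case False
      then have T: "kless (K s) (K r)" using tot by auto
      have "f {r,s} = s" unfolding f_def
        apply (rule some_equality) using T that asym by auto
      then show "(f {r, s} = r) = kless (K r) (K s) \<and> f {r, s} \<in> {r, s}" using False that by simp
    qed
  qed
  show "two_point_selection f" unfolding two_point_selection_def using key by blast
  show "\<And>x r. sel_less f x r \<longleftrightarrow> x \<noteq> r \<and> kless (K x) (K r)"
    unfolding sel_less_def using key by blast
qed

theorem corollary3p13:
  fixes U :: "real set"
  assumes "CH"
    and "U \<noteq> {}"
    and "uncountable (UNIV - U)"
  shows "\<exists>f. two_point_selection f \<and> \<not> openin (tau_sel f) U"
proof -
  obtain u where u: "u \<in> U" using assms(2) by auto
  have "infinite (UNIV - U)" using assms(3) countable_finite by blast
  then obtain c :: "nat \<Rightarrow> real" where c: "inj c" "range c \<subseteq> UNIV - U"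
    using infinite_countable_subset by blast
  have cU: "c n \<notin> U" for n using c by auto
  have uc: "c n \<noteq> u" for n using cU u by auto
  define b where "b x = (if x \<in> range c then 1 / (real (inv c x) + 1) else 0)" for x
  have bc: "b (c n) = 1 / (real n + 1)" for n using c(1) by (simp add: b_def)
  define K where "K x = (if x \<in> insert u (range c) then u else x, b x)" for x
  have bu: "b u = 0" using uc by (auto simp: b_def)
  have injK: "inj K"
  proof (rule injI)
    fix x y assume "K x = K y"
    then have e1: "(if x \<in> insert u (range c) then u else x) = (if y \<in> insert u (range c) then u else y)"
      and e2: "b x = b y" by (auto simp: K_def)
    show "x = y"
    proof (cases "x \<in> insert u (range c)")
      case True
      then have "y \<in> insert u (range c)" using e1 by (auto split: if_splits)
      then show ?thesis using True e2 bu bc c(1)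
        by (auto simp: inj_eq) 
    next
      case False
      then show ?thesis using e1 by (auto split: if_splits)
    qed
  qed
  define f where "f \<equiv> (\<lambda>A. SOME x. x \<in> A \<and> (\<forall>y\<in>A. y \<noteq> x \<longrightarrow> kless (K x) (K y)))"
  have ts: "two_point_selection f" and sl: "\<And>x r. sel_less f x r \<longleftrightarrow> x \<noteq> r \<and> kless (K x) (K r)"
    using sel_from_key[OF injK] unfolding f_def by blast+
  have Ku: "K u = (u, 0)" using bu by (simp add: K_def)
  have Kc: "K (c n) = (u, 1 / (real n + 1))" for n using bc by (simp add: K_def)
  have Kr: "r \<notin> insert u (range c) \<Longrightarrow> K r = (r, 0)" for r by (simp add: K_def b_def)
  have main: "u \<in> W \<longrightarrow> eventually (\<lambda>n. c n \<in> W) sequentially"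
    if "generate_topology_on (range (sel_left_ray f) \<union> range (sel_right_ray f)) W" for W
    using that
  proof induction
    case Empty then show ?case by simp
  next
    case (Int a b) then show ?case by (auto intro: eventually_conj elim: eventually_mono)
  next
    case (UN KK)
    show ?case
    proof
      assume "u \<in> \<Union>KK"
      then obtain X where X: "X \<in> KK" "u \<in> X" by auto
      then have "eventually (\<lambda>n. c n \<in> X) sequentially" using UN.IH by blast
      then show "eventually (\<lambda>n. c n \<in> \<Union>KK) sequentially"
        by (rule eventually_mono) (use X in auto)
    qed
  next
    case (Basis s)
    then obtain r where "s = sel_left_ray f r \<or> s = sel_right_ray f r" by auto
    then show ?case
    proof
      assume s: "s = sel_left_ray f r"
      show ?case
      proof
        assume "u \<in> s"
        then have ur: "u \<noteq> r" "kless (K u) (K r)" using s sl by (auto simp: sel_left_ray_def)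
        show "eventually (\<lambda>n. c n \<in> s) sequentially"
        proof (cases "r \<in> range c")
          case True
          then obtain m where m: "r = c m" by auto
          have "c n \<in> s" if "n \<ge> Suc m" for n
          proof -
            have "n \<noteq> m" using that by auto
            then have "c n \<noteq> r" using c(1) m by (auto simp: inj_eq)
            moreover have "1 / (real n + 1) < 1 / (real m + 1)" using that
              by (simp add: frac_less2)
            ultimately show ?thesis using s sl m Kc by (auto simp: sel_left_ray_def kless_def)
          qed
          then show ?thesis unfolding eventually_sequentially by blast
        next
          case False
          then have "K r = (r, 0)" using Kr ur by auto
          then have "u < r" using ur Ku by (auto simp: kless_def)
          then have "c n \<in> s" for n using s sl Kc \<open>K r = (r,0)\<close> by (auto simp: sel_left_ray_def kless_def)
          then show ?thesis by simp
        qed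
      qed
    next
      assume s: "s = sel_right_ray f r"
      show ?case
      proof
        assume "u \<in> s"
        then have ur: "u \<noteq> r" "kless (K r) (K u)" using s sl by (auto simp: sel_right_ray_def)
        show "eventually (\<lambda>n. c n \<in> s) sequentially"
        proof (cases "r \<in> range c")
          case True
          then obtain m where m: "r = c m" by auto
          have "0 < 1 / (real m + 1)" by simp
          then have False using ur Ku Kc m by (auto simp: kless_def)
          then show ?thesis by simp
        next
          case False
          then have "K r = (r, 0)" using Kr ur by auto
          then have "r < u" using ur Ku by (auto simp: kless_def)
          then have "c n \<in> s" for n using s sl Kc \<open>K r = (r,0)\<close> by (auto simp: sel_right_ray_def kless_def)
          then show ?thesis by simp
        qed
      qed
    qed
  qed
  have "\<not> openin (tau_sel f) U"
  proof
    assume "openin (tau_sel f) U"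
    then have "generate_topology_on (range (sel_left_ray f) \<union> range (sel_right_ray f)) U"
      unfolding tau_sel_def by (rule openin_topology_generated_by)
    then have "eventually (\<lambda>n. c n \<in> U) sequentially" using main u by blast
    then show False using cU by (simp add: eventually_sequentially) 
  qed
  then show ?thesis using ts by blast
qed

end
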